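(* Let $\Gamma$ be a connected $\delta$-hyperbolic graph with base vertex $x_0$, and let $x\in\Gamma$ and $n\le\ell(x)$. Let $p\in V(x,B_n)$, let $x_0,x_1,\ldots,x_{\ell(x)}$ be a geodesic from $x_0$ to $x$, and let $p_0,p_1,\ldots,p_n$ be a geodesic from $x_0$ to $p$. Then $d(x_i,p_i)\le4\delta+2$ for all $0\le i\le n$.
   Context: $\Gamma$ is identified with its vertex set with path metric $d$. It is $\delta$-hyperbolic if for every geodesic triangle with sides $[a,b],[a,c],[b,c]$ and every vertex $v\in[a,b]$ there is a vertex $w\in[a,c]\cup[b,c]$ with $d(v,w)\le\delta$. Set $\ell(x)=d(x_0,x)$ and $B_n=\{x:\ell(x)\le n\}$. For finite $B\subseteq\Gamma$ and $x\in\Gamma$, a point $p\in B$ is visible from $x$ if $d(p,x)<d(p,q)+d(q,x)$ for all $q\in B\setminus\{p\}$; $V(x,B)$ denotes the set of such points. *)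

theory Defs
  imports Complex_Main
begin

text \<open>A graph is given by a symmetric adjacency relation E on the vertex type 'a;
  the graph is identified with its vertex set (all of 'a).\<close>

definition is_walk :: "('a \<Rightarrow> 'a \<Rightarrow> bool) \<Rightarrow> (nat \<Rightarrow> 'a) \<Rightarrow> nat \<Rightarrow> bool" where
  "is_walk E f n \<longleftrightarrow> (\<forall>i<n. E (f i) (f (Suc i)))"

definition graph_connected :: "('a \<Rightarrow> 'a \<Rightarrow> bool) \<Rightarrow> bool" where
  "graph_connected E \<longleftrightarrow> (\<forall>u v. \<exists>f n. f 0 = u \<and> f n = v \<and> is_walk E f n)"

definition gdist :: "('a \<Rightarrow> 'a \<Rightarrow> bool) \<Rightarrow> 'a \<Rightarrow> 'a \<Rightarrow> nat" where
  "gdist E u v = (LEAST n. \<exists>f. f 0 = u \<and> f n = v \<and> is_walk E f n)"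

definition is_geodesic :: "('a \<Rightarrow> 'a \<Rightarrow> bool) \<Rightarrow> 'a \<Rightarrow> 'a \<Rightarrow> (nat \<Rightarrow> 'a) \<Rightarrow> bool" where
  "is_geodesic E a b g \<longleftrightarrow> g 0 = a \<and> g (gdist E a b) = b \<and>
     (\<forall>i\<le>gdist E a b. \<forall>j\<le>gdist E a b. gdist E (g i) (g j) = (if i \<le> j then j - i else i - j))"

definition geod_verts :: "('a \<Rightarrow> 'a \<Rightarrow> bool) \<Rightarrow> 'a \<Rightarrow> 'a \<Rightarrow> (nat \<Rightarrow> 'a) \<Rightarrow> 'a set" where
  "geod_verts E a b g = g ` {0..gdist E a b}"

definition hyperbolic :: "('a \<Rightarrow> 'a \<Rightarrow> bool) \<Rightarrow> real \<Rightarrow> bool" where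
  "hyperbolic E \<delta> \<longleftrightarrow>
    (\<forall>a b c gab gac gbc. is_geodesic E a b gab \<and> is_geodesic E a c gac \<and> is_geodesic E b c gbc \<longrightarrow>
      (\<forall>v\<in>geod_verts E a b gab. \<exists>w\<in>geod_verts E a c gac \<union> geod_verts E b c gbc.
          real (gdist E v w) \<le> \<delta>))"

definition ball_n :: "('a \<Rightarrow> 'a \<Rightarrow> bool) \<Rightarrow> 'a \<Rightarrow> nat \<Rightarrow> 'a set" where
  "ball_n E x0 n = {x. gdist E x0 x \<le> n}"

definition visible_set :: "('a \<Rightarrow> 'a \<Rightarrow> bool) \<Rightarrow> 'a \<Rightarrow> 'a set \<Rightarrow> 'a set" where
  "visible_set E x B = {p\<in>B. \<forall>q\<in>B - {p}. gdist E p x < gdist E p q + gdist E q x}"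

end

theory Submission
  imports Defs
begin

lemma gd_walk:
  assumes "graph_connected E"
  shows "\<exists>f. f 0 = u \<and> f (gdist E u v) = v \<and> is_walk E f (gdist E u v)"
proof -
  from assms obtain f n where "f 0 = u \<and> f n = v \<and> is_walk E f n"
    unfolding graph_connected_def by blast
  then have "\<exists>n f. f 0 = u \<and> f n = v \<and> is_walk E f n" by blast
  from LeastI_ex[OF this] show ?thesis unfolding gdist_def .
qed

lemma gd_le: "f 0 = u \<Longrightarrow> f k = v \<Longrightarrow> is_walk E f k \<Longrightarrow> gdist E u v \<le> k"
  unfolding gdist_def by (rule Least_le) blast

lemma gd_refl: "gdist E u u = 0"
  using gd_le[of "\<lambda>_. u" u 0 u E] by (simp add: is_walk_def)

lemma gd_zero: "graph_connected E \<Longrightarrow> gdist E u v = 0 \<Longrightarrow> u = v"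
  using gd_walk by metis

lemma gd_tri:
  assumes "graph_connected E"
  shows "gdist E u w \<le> gdist E u v + gdist E v w"
proof -
  obtain a where a_def: "a = gdist E u v" by blast
  obtain b where b_def: "b = gdist E v w" by blast
  obtain f where f: "f 0 = u" "f a = v" "is_walk E f a" using gd_walk[OF assms] a_def by blast
  obtain g where g: "g 0 = v" "g b = w" "is_walk E g b" using gd_walk[OF assms] b_def by blast
  define h where "h = (\<lambda>i. if i \<le> a then f i else g (i - a))"
  have "is_walk E h (a + b)"
    unfolding is_walk_def
  proof (intro allI impI)
    fix i assume i: "i < a + b"
    show "E (h i) (h (Suc i))"
    proof (cases "i < a")
      case True then show ?thesis using f(3) unfolding h_def is_walk_def by auto
    next
      case False
      then have "h i = g (i - a)" using f(2) g(1) unfolding h_def by auto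
      moreover have "h (Suc i) = g (Suc (i - a))" using False unfolding h_def by (simp add: Suc_diff_le)
      moreover have "i - a < b" using i False by simp
      ultimately show ?thesis using g(3) unfolding is_walk_def by auto
    qed
  qed
  moreover have "h 0 = u" using f unfolding h_def by simp
  moreover have "h (a+b) = w" using f g unfolding h_def by (cases "b = 0") auto
  ultimately show ?thesis using gd_le a_def b_def by metis
qed

lemma gd_le_sym:
  assumes sym: "\<And>u v. E u v \<Longrightarrow> E v u" and conn: "graph_connected E"
  shows "gdist E u v \<le> gdist E v u"
proof -
  obtain k where k: "k = gdist E v u" by blast
  obtain f where f: "f 0 = v" "f k = u" "is_walk E f k" using gd_walk[OF conn] k by blast
  define h where "h = (\<lambda>i. f (k - i))"
  have "is_walk E h k"
    unfolding is_walk_def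
  proof (intro allI impI)
    fix i assume i: "i < k"
    have "E (f (k - Suc i)) (f (Suc (k - Suc i)))" using f(3) i unfolding is_walk_def by auto
    moreover have "Suc (k - Suc i) = k - i" using i by simp
    ultimately show "E (h i) (h (Suc i))" unfolding h_def using sym by auto
  qed
  moreover have "h 0 = u" "h k = v" using f unfolding h_def by auto
  ultimately show ?thesis using gd_le k by metis
qed

lemma gd_sym:
  assumes sym: "\<And>u v. E u v \<Longrightarrow> E v u" and conn: "graph_connected E"
  shows "gdist E u v = gdist E v u"
  using gd_le_sym[OF assms, of u v] gd_le_sym[OF assms, of v u] by simp

lemma gd_sub:
  assumes "is_walk E f k" "i \<le> j" "j \<le> k"
  shows "gdist E (f i) (f j) \<le> j - i"
proof -
  have "is_walk E (\<lambda>t. f (i + t)) (j - i)"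
    using assms unfolding is_walk_def by auto
  then show ?thesis using gd_le[of "\<lambda>t. f (i + t)" "f i" "j - i" "f j"] assms by simp
qed

lemma geod_exists:
  assumes sym: "\<And>u v. E u v \<Longrightarrow> E v u" and conn: "graph_connected E"
  shows "\<exists>g. is_geodesic E u v g"
proof -
  obtain d where d: "d = gdist E u v" by blast
  obtain f where f: "f 0 = u" "f d = v" "is_walk E f d" using gd_walk[OF conn] d by blast
  have key: "gdist E (f i) (f j) = j - i" if "i \<le> j" "j \<le> d" for i j
  proof -
    have up: "gdist E (f i) (f j) \<le> j - i" using gd_sub[OF f(3) that] .
    have "d \<le> gdist E u (f i) + gdist E (f i) (f j) + gdist E (f j) v"
      using gd_tri[OF conn, of u v "f i"] gd_tri[OF conn, of "f i" v "f j"] d by simp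
    moreover have "gdist E u (f i) \<le> i" using gd_sub[OF f(3), of 0 i] f(1) that by simp
    moreover have "gdist E (f j) v \<le> d - j" using gd_sub[OF f(3), of j d] f(2) that by simp
    ultimately show ?thesis using up that by linarith
  qed
  have "is_geodesic E u v f"
    unfolding is_geodesic_def
  proof (intro conjI allI impI)
    fix i j assume "i \<le> gdist E u v" "j \<le> gdist E u v"
    then show "gdist E (f i) (f j) = (if i \<le> j then j - i else i - j)"
      using key[of i j] key[of j i] gd_sym[OF sym conn, of "f i" "f j"] d by auto
  qed (use f d in auto)
  then show ?thesis by blast
qed

theorem mainTheorem16:
  fixes E :: "'a \<Rightarrow> 'a \<Rightarrow> bool" and \<delta> :: real and x0 x p :: 'a
    and n :: nat and xs ps :: "nat \<Rightarrow> 'a"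
  assumes sym: "\<And>u v. E u v \<Longrightarrow> E v u"
    and conn: "graph_connected E"
    and hyp: "hyperbolic E \<delta>"
    and n_le: "n \<le> gdist E x0 x"
    and vis: "p \<in> visible_set E x (ball_n E x0 n)"
    and geo_x: "is_geodesic E x0 x xs"
    and geo_p: "is_geodesic E x0 p ps"
  shows "\<forall>i\<le>n. real (gdist E (xs i) (ps i)) \<le> 4 * \<delta> + 2"
proof -
  define L where "L = gdist E x0 x"
  define m where "m = gdist E x0 p"
  define D where "D = gdist E p x"
  obtain g where geo_g: "is_geodesic E p x g" using geod_exists[OF sym conn] by blast
  have gs: "\<And>u v. gdist E u v = gdist E v u" using gd_sym[OF sym conn] by blast
  note tri = gd_tri[OF conn]
  have xs0: "xs 0 = x0" and xsL: "xs L = x"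
    and xsd: "\<And>a b. a \<le> L \<Longrightarrow> b \<le> L \<Longrightarrow> gdist E (xs a) (xs b) = (if a \<le> b then b - a else a - b)"
    using geo_x unfolding is_geodesic_def L_def by auto
  have ps0: "ps 0 = x0"
    and psd: "\<And>a b. a \<le> m \<Longrightarrow> b \<le> m \<Longrightarrow> gdist E (ps a) (ps b) = (if a \<le> b then b - a else a - b)"
    using geo_p unfolding is_geodesic_def m_def by auto
  have g0: "g 0 = p" and gD: "g D = x"
    and gd: "\<And>a b. a \<le> D \<Longrightarrow> b \<le> D \<Longrightarrow> gdist E (g a) (g b) = (if a \<le> b then b - a else a - b)"
    using geo_g unfolding is_geodesic_def D_def by auto
  have m_le: "m \<le> n" using vis unfolding visible_set_def ball_n_def m_def by auto
  have visq: "\<And>q. gdist E x0 q \<le> n \<Longrightarrow> q \<noteq> p \<Longrightarrow> D < gdist E p q + gdist E q x"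
    using vis unfolding visible_set_def ball_n_def D_def by auto
  have far: "n < gdist E x0 (g s)" if "1 \<le> s" "s \<le> D" for s
  proof (rule ccontr)
    assume "\<not> ?thesis"
    moreover have "gdist E p (g s) = s" using gd[of 0 s] g0 that by simp
    moreover have "gdist E (g s) x = D - s" using gd[of s D] gD that by simp
    moreover have "g s \<noteq> p" using \<open>gdist E p (g s) = s\<close> that gd_refl[of E p] by auto
    ultimately show False using visq[of "g s"] that by auto
  qed
  have m_eq: "m = n"
  proof (cases "D = 0")
    case True
    then have "p = x" using gd_zero[OF conn, of p x] D_def by simp
    then show ?thesis using m_le n_le m_def by simp
  next
    case False
    then have "n < gdist E x0 (g 1)" using far[of 1] by simp
    moreover have "gdist E x0 (g 1) \<le> m + gdist E p (g 1)" using tri[of x0 "g 1" p] m_def by simp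
    moreover have "gdist E p (g 1) = 1" using gd[of 0 1] g0 False by simp
    ultimately show ?thesis using m_le by simp
  qed
  have farall: "n \<le> gdist E x0 (g s)" if "s \<le> D" for s
    using far[of s] that m_eq m_def g0 by (cases "s = 0") auto
  have hyp': "\<forall>v\<in>geod_verts E x0 p ps. \<exists>w\<in>geod_verts E x0 x xs \<union> geod_verts E p x g.
          real (gdist E v w) \<le> \<delta>"
    using hyp geo_p geo_x geo_g unfolding hyperbolic_def by blast
  have near: "(\<exists>k\<le>L. real (gdist E (ps j) (xs k)) \<le> \<delta>) \<or> real n \<le> real j + \<delta>" if "j \<le> n" for j
  proof -
    have "ps j \<in> geod_verts E x0 p ps" unfolding geod_verts_def using that m_eq m_def by auto
    then obtain w where w: "w \<in> geod_verts E x0 x xs \<union> geod_verts E p x g"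
      "real (gdist E (ps j) w) \<le> \<delta>" using hyp' by blast
    show ?thesis
    proof (cases "w \<in> geod_verts E x0 x xs")
      case True
      then obtain k where "k \<le> L" "w = xs k" unfolding geod_verts_def L_def by auto
      then show ?thesis using w by auto
    next
      case False
      then obtain s where s: "s \<le> D" "w = g s" using w unfolding geod_verts_def D_def by auto
      have "n \<le> gdist E x0 w" using farall s by simp
      also have "\<dots> \<le> gdist E x0 (ps j) + gdist E (ps j) w" using tri by blast
      also have "gdist E x0 (ps j) = j" using psd[of 0 j] ps0 that m_eq by simp
      finally have "n \<le> j + gdist E (ps j) w" .
      then have "real n \<le> real j + real (gdist E (ps j) w)" by linarith
      then show ?thesis using w by linarith
    qed
  qed
  have dpos: "0 \<le> \<delta>"
  proof -
    have "ps 0 \<in> geod_verts E x0 p ps" unfolding geod_verts_def by auto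
    then obtain w where "real (gdist E (ps 0) w) \<le> \<delta>" using hyp' by blast
    then show ?thesis by linarith
  qed
  show ?thesis
  proof (intro allI impI)
    fix i assume i: "i \<le> n"
    define S where "S = {j. j \<le> i \<and> (\<exists>k\<le>L. real (gdist E (ps j) (xs k)) \<le> \<delta>)}"
    have finS: "finite S" unfolding S_def by auto
    have "0 \<in> S" unfolding S_def using xs0 ps0 gd_refl[of E x0] dpos by force
    define i' where "i' = Max S"
    have "i' \<in> S" using finS \<open>0 \<in> S\<close> i'_def Max_in by blast
    then have i'i: "i' \<le> i" and "\<exists>k\<le>L. real (gdist E (ps i') (xs k)) \<le> \<delta>" unfolding S_def by auto
    then obtain k where k: "k \<le> L" "real (gdist E (ps i') (xs k)) \<le> \<delta>" by blast
    have gap: "real i - real i' \<le> 1 + \<delta>"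
    proof (cases "i' = i")
      case True then show ?thesis using dpos by simp
    next
      case False
      then have "Suc i' \<le> i" using i'i by simp
      moreover have "Suc i' \<notin> S"
        using Max_ge[OF finS, of "Suc i'"] i'_def by auto
      ultimately have "real n \<le> real (Suc i') + \<delta>" using near[of "Suc i'"] i unfolding S_def by auto
      then show ?thesis using i by simp
    qed
    define d0 where "d0 = gdist E (ps i') (xs k)"
    have nL: "n \<le> L" using n_le L_def by simp
    have e1: "gdist E (ps i) (ps i') = i - i'" using psd[of i i'] i i'i m_eq by simp
    have e2: "k \<le> i' + d0"
    proof -
      have "gdist E x0 (xs k) \<le> gdist E x0 (ps i') + gdist E (ps i') (xs k)" using tri by blast
      moreover have "gdist E x0 (xs k) = k" using xsd[of 0 k] xs0 k by simp
      moreover have "gdist E x0 (ps i') = i'" using psd[of 0 i'] ps0 i i'i m_eq by simp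
      ultimately show ?thesis using d0_def by simp
    qed
    have e3: "i' \<le> k + d0"
    proof -
      have "gdist E x0 (ps i') \<le> gdist E x0 (xs k) + gdist E (xs k) (ps i')" using tri by blast
      moreover have "gdist E x0 (xs k) = k" using xsd[of 0 k] xs0 k by simp
      moreover have "gdist E x0 (ps i') = i'" using psd[of 0 i'] ps0 i i'i m_eq by simp
      ultimately show ?thesis using d0_def gs by metis
    qed
    have e4: "gdist E (xs k) (xs i) \<le> d0 + (i - i')"
      using xsd[of k i] k i nL e2 e3 i'i by auto
    have "gdist E (xs i) (ps i) \<le> gdist E (ps i) (ps i') + gdist E (ps i') (xs k) + gdist E (xs k) (xs i)"
      using tri[of "ps i" "xs k" "ps i'"] tri[of "ps i" "xs i" "xs k"] gs[of "xs i" "ps i"] by linarith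
    then have "gdist E (xs i) (ps i) \<le> 2 * (i - i') + 2 * d0" using e1 e4 d0_def by simp
    then have "real (gdist E (xs i) (ps i)) \<le> 2 * (real i - real i') + 2 * real d0"
      using i'i by (simp add: of_nat_diff)
    then show "real (gdist E (xs i) (ps i)) \<le> 4 * \<delta> + 2" using gap k(2) unfolding d0_def by (smt (verit))
  qed
qed

end
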